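(* Let $\mathcal{A}$ be a unital Banach algebra with unit $I$. Suppose there are a constant $R>0$, an element $G\in\mathcal{A}$, a constant $C$, and a family $(A^{(\mu)})_{\mu\in M}$ of functions $r\mapsto A^{(\mu)}_r=I+rG+\mathfrak{S}^{(\mu)}_r\in\mathcal{A}$ on $\mathbb{R}_+$ such that $\|\mathfrak{S}^{(\mu)}_r\|\le r^2\frac{C^2}{2}$ for all $\mu\in M$ and all $r\le R$. Then for all intervals $[s,t]\subset\mathbb{R}_+$, all partitions $\alpha=\{s=t_0<t_1<\dots<t_n=t\}$ ($n\in\mathbb{N}$) of $[s,t]$ with $\|\alpha\|\le R$, and every choice of $\mu_1,\dots,\mu_n\in M$, $$\big\|A^{(\mu_1)}_{t_1-t_0}\cdots A^{(\mu_n)}_{t_n-t_{n-1}}-e^{(t-s)G}\big\|\le\|\alpha\|(t-s)\,e^{(t-s)\max(\|G\|,C)}\,\frac{C^2+\|G\|^2e^{\|\alpha\|\|G\|}}{2}.$$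
   Context: For a partition $\alpha=\{s=t_0<t_1<\dots<t_n=t\}$, $\|\alpha\|:=\max_{0\le j\le n-1}(t_{j+1}-t_j)$. *)

theory Defs
  imports "HOL-Analysis.Analysis"
begin

text \<open>Mesh of a partition s = t 0 < t 1 < ... < t n = t (for n >= 1).\<close>
definition mesh :: "(nat \<Rightarrow> real) \<Rightarrow> nat \<Rightarrow> real" where
  "mesh tp n = Max ((\<lambda>j. tp (Suc j) - tp j) ` {..<n})"

end

theory Submission
  imports Defs
begin

lemma exp_rem_bound:
  fixes x :: "'a :: {real_normed_algebra_1, banach}"
  shows "norm (exp x - 1 - x) \<le> norm x ^ 2 / 2 * exp (norm x)"
proof -
  let ?f = "\<lambda>n. inverse (fact (n + 2)) *\<^sub>R (x ^ (n + 2))"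
  let ?g = "\<lambda>n. norm x ^ 2 / 2 * (norm x ^ n /\<^sub>R fact n)"
  have e: "exp x - 1 - x = suminf ?f" using exp_first_two_terms[of x] by simp
  have sg: "summable ?g"
    by (intro summable_mult summable_exp_generic)
  have le: "norm (?f n) \<le> ?g n" for n
  proof -
    have "norm (?f n) \<le> inverse (fact (n+2)) * norm x ^ (n+2)"
      using norm_power_ineq[of x "n+2"] by (simp add: mult_left_mono)
    also have "\<dots> \<le> inverse (2 * fact n) * norm x ^ (n+2)"
    proof (rule mult_right_mono)
      have "(2::real) * fact n \<le> fact (n+2)"
      proof -
        have "fact (n+2) = real ((n+2)*(n+1)) * fact n"
          by (simp add: fact_Suc algebra_simps numeral_2_eq_2)
        moreover have "real ((n+2)*(n+1)) \<ge> 2" by simp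
        ultimately show ?thesis by (simp add: mult_right_mono)
      qed
      then show "inverse (fact (n+2)) \<le> inverse (2 * fact n :: real)"
        by (intro le_imp_inverse_le) auto
    qed simp
    also have "\<dots> = ?g n" by (simp add: power_add field_simps power2_eq_square)
    finally show ?thesis .
  qed
  have sf: "summable (\<lambda>n. norm (?f n))"
    by (rule summable_comparison_test[OF _ sg]) (use le in auto)
  have "norm (suminf ?f) \<le> suminf (\<lambda>n. norm (?f n))" by (rule summable_norm[OF sf])
  also have "\<dots> \<le> suminf ?g" by (rule suminf_le[OF le sf sg])
  also have "\<dots> = norm x ^ 2 / 2 * suminf (\<lambda>n. norm x ^ n /\<^sub>R fact n)"
    by (rule suminf_mult[OF summable_exp_generic])
  also have "\<dots> = norm x ^ 2 / 2 * exp (norm x)" by (simp add: exp_def)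
  finally show ?thesis using e by simp
qed

lemma prod_norm_bound:
  fixes Y :: "nat \<Rightarrow> 'a :: real_normed_algebra_1"
  assumes "\<And>i. i \<in> set xs \<Longrightarrow> norm (Y i) \<le> exp (k i)"
  shows "norm (prod_list (map Y xs)) \<le> exp (sum_list (map k xs))"
  using assms
proof (induction xs)
  case Nil then show ?case by simp
next
  case (Cons i xs)
  have "norm (Y i * prod_list (map Y xs)) \<le> norm (Y i) * norm (prod_list (map Y xs))"
    by (rule norm_mult_ineq)
  also have "\<dots> \<le> exp (k i) * exp (sum_list (map k xs))"
    by (intro mult_mono) (use Cons in auto)
  finally show ?case by (simp add: exp_add)
qed

lemma telescope_bound:
  fixes X Y :: "nat \<Rightarrow> 'a :: real_normed_algebra_1"
  assumes "\<And>i. i \<in> set xs \<Longrightarrow> norm (X i) \<le> exp (k i)"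
    and "\<And>i. i \<in> set xs \<Longrightarrow> norm (Y i) \<le> exp (k i)"
    and "\<And>i. i \<in> set xs \<Longrightarrow> 0 \<le> k i"
    and "\<And>i. i \<in> set xs \<Longrightarrow> norm (X i - Y i) \<le> e i"
  shows "norm (prod_list (map X xs) - prod_list (map Y xs))
           \<le> exp (sum_list (map k xs)) * sum_list (map e xs)"
  using assms
proof (induction xs)
  case Nil
  then show ?case by simp
next
  case (Cons i xs)
  let ?PX = "prod_list (map X xs)" and ?PY = "prod_list (map Y xs)"
  let ?K = "sum_list (map k xs)" and ?E = "sum_list (map e xs)"
  have IH: "norm (?PX - ?PY) \<le> exp ?K * ?E" using Cons by auto
  have ki: "0 \<le> k i" using Cons by auto
  have Xi: "norm (X i) \<le> exp (k i)" using Cons by auto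
  have ei: "norm (X i - Y i) \<le> e i" using Cons by auto
  have PY: "norm ?PY \<le> exp ?K"
    by (rule prod_norm_bound) (use Cons.prems(2) in auto)
  have E0: "0 \<le> ?E" using IH by (smt (verit) exp_gt_zero norm_ge_zero zero_le_mult_iff)
  have "X i * ?PX - Y i * ?PY = X i * (?PX - ?PY) + (X i - Y i) * ?PY"
    by (simp add: algebra_simps)
  hence "norm (X i * ?PX - Y i * ?PY) = norm (X i * (?PX - ?PY) + (X i - Y i) * ?PY)" by simp
  also have "\<dots> \<le> norm (X i * (?PX - ?PY)) + norm ((X i - Y i) * ?PY)"
    by (rule norm_triangle_ineq)
  also have "\<dots> \<le> norm (X i) * norm (?PX - ?PY) + norm (X i - Y i) * norm ?PY"
    by (intro add_mono norm_mult_ineq)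
  also have "\<dots> \<le> exp (k i) * (exp ?K * ?E) + e i * exp ?K"
    by (intro add_mono mult_mono) (use IH Xi ei PY order_trans[OF norm_ge_zero ei] in auto)
  also have "\<dots> \<le> exp (k i + ?K) * (?E + e i)"
  proof -
    have "e i * exp ?K \<le> e i * exp (k i + ?K)"
      using ki ei by (intro mult_left_mono) (auto intro: order_trans[OF norm_ge_zero])
    then show ?thesis by (simp add: exp_add algebra_simps)
  qed
  finally show ?case by (simp add: add.commute)
qed

lemma prod_exp_list:
  fixes G :: "'a :: {real_normed_algebra_1, banach}"
  shows "prod_list (map (\<lambda>j. exp (f j *\<^sub>R G)) xs) = exp (sum_list (map f xs) *\<^sub>R G)"
proof (induction xs)
  case Nil then show ?case by simp
next
  case (Cons a xs)
  have "exp ((f a + sum_list (map f xs)) *\<^sub>R G) = exp (f a *\<^sub>R G + sum_list (map f xs) *\<^sub>R G)"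
    by (simp add: scaleR_add_left)
  also have "\<dots> = exp (f a *\<^sub>R G) * exp (sum_list (map f xs) *\<^sub>R G)"
    by (rule exp_add_commuting) simp
  finally show ?case using Cons by simp
qed

theorem lemma4p1:
  fixes G :: "'a :: {real_normed_algebra_1, banach}"
    and A S :: "'m \<Rightarrow> real \<Rightarrow> 'a"
    and M :: "'m set"
    and R C s t :: real
    and n :: nat
    and tp :: "nat \<Rightarrow> real"
    and \<mu> :: "nat \<Rightarrow> 'm"
  assumes R_pos: "R > 0"
    and C_nonneg: "C \<ge> 0"
    and A_def: "\<And>m r. m \<in> M \<Longrightarrow> r \<ge> 0 \<Longrightarrow> A m r = 1 + r *\<^sub>R G + S m r"
    and S_bound: "\<And>m r. m \<in> M \<Longrightarrow> 0 \<le> r \<Longrightarrow> r \<le> R \<Longrightarrow> norm (S m r) \<le> r^2 * C^2 / 2"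
    and s_nonneg: "0 \<le> s"
    and n_pos: "n \<ge> 1"
    and tp_start: "tp 0 = s"
    and tp_end: "tp n = t"
    and tp_incr: "\<And>j. j < n \<Longrightarrow> tp j < tp (Suc j)"
    and mesh_le: "mesh tp n \<le> R"
    and \<mu>_in: "\<And>i. 1 \<le> i \<Longrightarrow> i \<le> n \<Longrightarrow> \<mu> i \<in> M"
  shows "norm (prod_list (map (\<lambda>j. A (\<mu> (Suc j)) (tp (Suc j) - tp j)) [0..<n])
                - exp ((t - s) *\<^sub>R G))
         \<le> mesh tp n * (t - s) * exp ((t - s) * max (norm G) C)
            * (C^2 + (norm G)^2 * exp (mesh tp n * norm G)) / 2"
proof -
  define h where "h j = tp (Suc j) - tp j" for j
  define d where "d = mesh tp n"
  define a where "a = norm G"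
  define K where "K = max a C"
  define c0 where "c0 = d * (C^2 + a^2 * exp (d * a)) / 2"
  have a0: "0 \<le> a" unfolding a_def by simp
  have hpos: "0 < h j" if "j < n" for j using tp_incr[OF that] by (simp add: h_def)
  have hd: "h j \<le> d" if "j < n" for j
    unfolding d_def mesh_def h_def using that by (intro Max_ge) auto
  have hR: "h j \<le> R" if "j < n" for j using hd[OF that] mesh_le d_def by simp
  have d0: "0 \<le> d" using hd[of 0] hpos[of 0] n_pos by simp
  have sumh: "sum_list (map h [0..<n]) = t - s"
  proof -
    have "sum_list (map h [0..<n]) = sum h {..<n}"
      by (simp add: sum_set_upt_conv_sum_list_nat[symmetric] atLeast0LessThan)
    also have "\<dots> = t - s" unfolding h_def by (simp add: sum_lessThan_telescope tp_start tp_end)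
    finally show ?thesis .
  qed
  have expeq: "exp ((t - s) *\<^sub>R G) = prod_list (map (\<lambda>j. exp (h j *\<^sub>R G)) [0..<n])"
    using prod_exp_list[of h G "[0..<n]"] sumh by simp
  have main: "norm (prod_list (map (\<lambda>j. A (\<mu> (Suc j)) (h j)) [0..<n])
                - prod_list (map (\<lambda>j. exp (h j *\<^sub>R G)) [0..<n]))
        \<le> exp (sum_list (map (\<lambda>j. h j * K) [0..<n])) * sum_list (map (\<lambda>j. h j * c0) [0..<n])"
  proof (rule telescope_bound)
    fix j assume "j \<in> set [0..<n]"
    hence j: "j < n" by simp
    have mu: "\<mu> (Suc j) \<in> M" using \<mu>_in j by simp
    have hj: "0 < h j" "h j \<le> d" "h j \<le> R" using hpos hd hR j by auto
    have Aeq: "A (\<mu> (Suc j)) (h j) = 1 + h j *\<^sub>R G + S (\<mu> (Suc j)) (h j)"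
      using A_def[OF mu] hj by simp
    have Sb: "norm (S (\<mu> (Suc j)) (h j)) \<le> h j ^ 2 * C ^ 2 / 2"
      using S_bound[OF mu] hj by simp
    have K0: "0 \<le> K" "a \<le> K" "C \<le> K" unfolding K_def using a0 by auto
    show "0 \<le> h j * K" using hj K0 by simp
    have "norm (A (\<mu> (Suc j)) (h j)) \<le> 1 + h j * a + h j ^ 2 * C ^ 2 / 2"
      unfolding Aeq a_def using Sb hj
      by (smt (verit) norm_one norm_scaleR norm_triangle_ineq abs_of_pos)
    also have "\<dots> \<le> 1 + h j * K + (h j * K) ^ 2 / 2"
    proof -
      have "h j * a \<le> h j * K" using hj K0 by (intro mult_left_mono) auto
      moreover have "(h j * C) ^ 2 \<le> (h j * K) ^ 2"
        using hj K0 C_nonneg by (intro power_mono mult_left_mono) auto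
      ultimately show ?thesis by (simp add: power_mult_distrib)
    qed
    also have "\<dots> \<le> exp (h j * K)" by (rule exp_lower_Taylor_quadratic) (use hj K0 in simp)
    finally show "norm (A (\<mu> (Suc j)) (h j)) \<le> exp (h j * K)" .
    have "norm (exp (h j *\<^sub>R G)) \<le> exp (norm (h j *\<^sub>R G))" by (rule norm_exp)
    also have "\<dots> = exp (h j * a)" using hj by (simp add: a_def)
    also have "\<dots> \<le> exp (h j * K)" using hj K0 by (simp add: mult_left_mono)
    finally show "norm (exp (h j *\<^sub>R G)) \<le> exp (h j * K)" .
    have eqd: "A (\<mu> (Suc j)) (h j) - exp (h j *\<^sub>R G)
          = S (\<mu> (Suc j)) (h j) - (exp (h j *\<^sub>R G) - 1 - h j *\<^sub>R G)"
      unfolding Aeq by (simp add: algebra_simps)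
    have "norm (A (\<mu> (Suc j)) (h j) - exp (h j *\<^sub>R G))
          \<le> norm (S (\<mu> (Suc j)) (h j)) + norm (exp (h j *\<^sub>R G) - 1 - h j *\<^sub>R G)"
      unfolding eqd by (rule norm_triangle_ineq4)
    also have "\<dots> \<le> h j ^ 2 * C ^ 2 / 2 + (h j * a) ^ 2 / 2 * exp (h j * a)"
      using Sb exp_rem_bound[of "h j *\<^sub>R G"] hj by (simp add: a_def)
    also have "\<dots> \<le> h j * c0"
    proof -
      have e1: "exp (h j * a) \<le> exp (d * a)" using hj a0 by (simp add: mult_right_mono)
      have "h j ^ 2 * C ^ 2 / 2 + (h j * a) ^ 2 / 2 * exp (h j * a)
            = h j * (h j * (C^2 + a^2 * exp (h j * a)) / 2)"
        by (simp add: power2_eq_square algebra_simps)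
      also have "\<dots> \<le> h j * (d * (C^2 + a^2 * exp (d * a)) / 2)"
        using hj e1 a0 d0
        by (intro mult_left_mono divide_right_mono mult_mono add_mono) auto
      finally show ?thesis by (simp add: c0_def)
    qed
    finally show "norm (A (\<mu> (Suc j)) (h j) - exp (h j *\<^sub>R G)) \<le> h j * c0" .
  qed
  have s1: "sum_list (map (\<lambda>j. h j * K) [0..<n]) = (t - s) * K"
    using sumh by (simp add: sum_set_upt_conv_sum_list_nat[symmetric] sum_distrib_right[symmetric])
  have s2: "sum_list (map (\<lambda>j. h j * c0) [0..<n]) = (t - s) * c0"
    using sumh by (simp add: sum_set_upt_conv_sum_list_nat[symmetric] sum_distrib_right[symmetric])
  show ?thesis
    using main unfolding expeq s1 s2
    by (simp add: h_def c0_def d_def a_def K_def algebra_simps)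
qed

end
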